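(* Let $G\in\mathbb C^{N\times N}$ be Hermitian positive definite, let $A\in\mathbb C^{N\times N}$ satisfy $GA=A^*G$, and let $B\in\mathbb C^{N\times N}$ satisfy $GB=B^*G\ge0$. Let $C_A,C_B$ be constants with $\|A\|_G\le C_A$ and $\|B\|_G\le C_B$. Suppose that for some $\alpha>0$ there exists $\beta>0$ with $$GB+\frac1{\alpha^2}A^*GBA\ge\beta G.$$ Then there exists $\delta>0$, depending only on $\alpha,\beta,C_A,C_B$, such that $$\lim_{T\to\infty}\frac1{2T}\int_{-T}^Te^{itA^*}GBe^{-itA}\,dt\ge\delta G$$ (the limit exists).
   Context: For Hermitian matrices $M_1,M_2$, $M_1\ge M_2$ means $M_1-M_2$ is positive semidefinite. $\|M\|_G$ denotes the operator norm of $M$ with respect to the norm $v\mapsto(v^*Gv)^{1/2}$ on $\mathbb C^N$. *)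

theory Defs
  imports "HOL-Analysis.Analysis"
begin

text \<open>Square complex matrices of size n are represented as functions
  nat => nat => complex; only the entries with indices below n matter.
  Vectors in C^n are functions nat => complex (entries below n matter).\<close>

type_synonym cmat = "nat \<Rightarrow> nat \<Rightarrow> complex"
type_synonym cvec = "nat \<Rightarrow> complex"

definition meq :: "nat \<Rightarrow> cmat \<Rightarrow> cmat \<Rightarrow> bool" where
  "meq n M P \<longleftrightarrow> (\<forall>i<n. \<forall>j<n. M i j = P i j)"

definition madj :: "cmat \<Rightarrow> cmat" where
  "madj M = (\<lambda>i j. cnj (M j i))"

definition mmult :: "nat \<Rightarrow> cmat \<Rightarrow> cmat \<Rightarrow> cmat" where
  "mmult n M P = (\<lambda>i j. \<Sum>k<n. M i k * P k j)"

definition msub :: "cmat \<Rightarrow> cmat \<Rightarrow> cmat" where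
  "msub M P = (\<lambda>i j. M i j - P i j)"

definition msmult :: "complex \<Rightarrow> cmat \<Rightarrow> cmat" where
  "msmult c M = (\<lambda>i j. c * M i j)"

definition mone :: cmat where
  "mone = (\<lambda>i j. if i = j then 1 else 0)"

primrec mpow :: "nat \<Rightarrow> cmat \<Rightarrow> nat \<Rightarrow> cmat" where
  "mpow n M 0 = mone"
| "mpow n M (Suc k) = mmult n M (mpow n M k)"

definition mexp :: "nat \<Rightarrow> cmat \<Rightarrow> cmat" where
  "mexp n M = (\<lambda>i j. \<Sum>k. mpow n M k i j / of_nat (fact k))"

definition mvec :: "nat \<Rightarrow> cmat \<Rightarrow> cvec \<Rightarrow> cvec" where
  "mvec n M v = (\<lambda>i. \<Sum>j<n. M i j * v j)"

definition quad :: "nat \<Rightarrow> cmat \<Rightarrow> cvec \<Rightarrow> complex" where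
  "quad n M v = (\<Sum>i<n. \<Sum>j<n. cnj (v i) * M i j * v j)"

definition hermitian :: "nat \<Rightarrow> cmat \<Rightarrow> bool" where
  "hermitian n M \<longleftrightarrow> meq n M (madj M)"

definition psd :: "nat \<Rightarrow> cmat \<Rightarrow> bool" where
  "psd n M \<longleftrightarrow> hermitian n M \<and> (\<forall>v. 0 \<le> Re (quad n M v))"

definition pos_def :: "nat \<Rightarrow> cmat \<Rightarrow> bool" where
  "pos_def n M \<longleftrightarrow> hermitian n M \<and> (\<forall>v. (\<exists>i<n. v i \<noteq> 0) \<longrightarrow> 0 < Re (quad n M v))"

definition loewner_ge :: "nat \<Rightarrow> cmat \<Rightarrow> cmat \<Rightarrow> bool" where
  "loewner_ge n M1 M2 \<longleftrightarrow> psd n (msub M1 M2)"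

definition gnorm :: "nat \<Rightarrow> cmat \<Rightarrow> cvec \<Rightarrow> real" where
  "gnorm n G v = sqrt (Re (quad n G v))"

definition opnorm_G :: "nat \<Rightarrow> cmat \<Rightarrow> cmat \<Rightarrow> real" where
  "opnorm_G n G M = Sup {gnorm n G (mvec n M v) / gnorm n G v | v. gnorm n G v \<noteq> 0}"

definition integrand :: "nat \<Rightarrow> cmat \<Rightarrow> cmat \<Rightarrow> cmat \<Rightarrow> real \<Rightarrow> cmat" where
  "integrand n G A B t =
     mmult n (mexp n (msmult (\<i> * of_real t) (madj A)))
       (mmult n (mmult n G B) (mexp n (msmult (- \<i> * of_real t) A)))"

definition time_avg :: "nat \<Rightarrow> cmat \<Rightarrow> cmat \<Rightarrow> cmat \<Rightarrow> real \<Rightarrow> cmat" where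
  "time_avg n G A B T =
     (\<lambda>i j. complex_of_real (1 / (2 * T)) * integral {-T..T} (\<lambda>t. integrand n G A B t i j))"

end

theory Submission
  imports Defs "Jordan_Normal_Form.Jordan_Normal_Form_Existence"
begin

lemma jm_struct:
  "i < sum_list (map fst n_as) \<Longrightarrow> j < sum_list (map fst n_as) \<Longrightarrow>
   jordan_matrix n_as $$ (i,j) \<noteq> 0 \<Longrightarrow> i \<noteq> j \<Longrightarrow>
   j = Suc i \<and> jordan_matrix n_as $$ (i,i) = jordan_matrix n_as $$ (j,j)"
proof (induction n_as arbitrary: i j)
  case Nil
  then show ?case by simp
next
  case (Cons p n_as)
  obtain m a where p: "p = (m,a)" by (cases p)
  let ?s = "sum_list (map fst n_as)"
  have dims: "dim_row (jordan_block m a) = m" "dim_col (jordan_block m a) = m"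
     "dim_row (jordan_matrix n_as) = ?s" "dim_col (jordan_matrix n_as) = ?s" by auto
  from Cons.prems have i: "i < m + ?s" and j: "j < m + ?s" by (auto simp: p)
  have idx0: "\<And>x y. x < m + ?s \<Longrightarrow> y < m + ?s \<Longrightarrow> jordan_matrix (p#n_as) $$ (x,y) =
     (if x < m then if y < m then jordan_block m a $$ (x,y) else 0 else if y < m then 0 else jordan_matrix n_as $$ (x-m,y-m))"
    by (simp add: p jordan_matrix_Cons)
  note idx = idx0[OF i j] and idxi = idx0[OF i i] and idxj = idx0[OF j j]
  show ?case
  proof (cases "i < m")
    case True
    then show ?thesis using Cons.prems idx idxi idxj
      by (auto split: if_splits)
  next
    case False
    then have "\<not> j < m" using Cons.prems idx by (auto split: if_splits)
    then have "jordan_matrix n_as $$ (i-m,j-m) \<noteq> 0" using False Cons.prems idx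
      by (auto split: if_splits)
    from Cons.IH[OF _ _ this] False \<open>\<not> j < m\<close> i j Cons.prems(4)
    have "j - m = Suc (i - m) \<and> jordan_matrix n_as $$ (i-m, i-m) = jordan_matrix n_as $$ (j-m, j-m)"
      by auto
    then show ?thesis using False \<open>\<not> j < m\<close> idxi idxj by (auto split: if_splits)
  qed
qed

lemma jnf_struct:
  fixes A :: "complex mat"
  assumes A: "A \<in> carrier_mat n n"
  shows "\<exists>P J Q. P \<in> carrier_mat n n \<and> J \<in> carrier_mat n n \<and> Q \<in> carrier_mat n n \<and>
     P * Q = 1\<^sub>m n \<and> Q * P = 1\<^sub>m n \<and> A = P * J * Q \<and>
     (\<forall>i<n. \<forall>j<n. J $$ (i,j) \<noteq> 0 \<longrightarrow> i \<noteq> j \<longrightarrow> j = Suc i \<and> J $$ (i,i) = J $$ (j,j))"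
proof -
  obtain as where "char_poly A = (\<Prod>a\<leftarrow>as. [:- a, 1:])" using char_poly_factorized[OF A] by blast
  from jordan_nf_exists[OF A this] obtain n_as where "jordan_nf A n_as" by blast
  then obtain P Q where w: "similar_mat_wit A (jordan_matrix n_as) P Q"
    unfolding jordan_nf_def similar_mat_def by blast
  have dr: "dim_row A = n" using A by auto
  from w have c: "jordan_matrix n_as \<in> carrier_mat n n" "P \<in> carrier_mat n n" "Q \<in> carrier_mat n n"
    and e: "P * Q = 1\<^sub>m n" "Q * P = 1\<^sub>m n" "A = P * jordan_matrix n_as * Q"
    unfolding similar_mat_wit_def Let_def dr by auto
  have s: "sum_list (map fst n_as) = n" using c(1) by auto
  show ?thesis
    apply (rule exI[of _ P], rule exI[of _ "jordan_matrix n_as"], rule exI[of _ Q])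
    using c e jm_struct[of _ n_as] s by auto
qed

lemma mult_idx: "X \<in> carrier_mat n n \<Longrightarrow> Y \<in> carrier_mat n n \<Longrightarrow> i < n \<Longrightarrow> j < n \<Longrightarrow>
  (X * Y) $$ (i,j) = (\<Sum>k<n. X $$ (i,k) * Y $$ (k,j))"
  by (auto simp: scalar_prod_def lessThan_atLeast0 intro!: sum.cong)


definition sform :: "nat \<Rightarrow> cmat \<Rightarrow> cvec \<Rightarrow> cvec \<Rightarrow> complex" where
  "sform n X x y = (\<Sum>i<n. \<Sum>j<n. cnj (x i) * X i j * y j)"

lemma quad_sform: "quad n X v = sform n X v v"
  by (simp add: quad_def sform_def)

lemma sum_swap23: "(\<Sum>p\<in>P. \<Sum>q\<in>Q. \<Sum>k\<in>K. f p q k) = (\<Sum>p\<in>P. \<Sum>k\<in>K. \<Sum>q\<in>Q. f p q k)"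
  by (rule sum.cong[OF refl], rule sum.swap)

lemma sum_swap12: "(\<Sum>p\<in>P. \<Sum>q\<in>Q. \<Sum>k\<in>K. f p q k) = (\<Sum>q\<in>Q. \<Sum>p\<in>P. \<Sum>k\<in>K. f p q k)"
  by (rule sum.swap)

lemma sum_rev3: "(\<Sum>p\<in>P. \<Sum>q\<in>Q. \<Sum>k\<in>K. f p q k) = (\<Sum>k\<in>K. \<Sum>q\<in>Q. \<Sum>p\<in>P. f p q k)"
  by (metis (no_types) sum_swap12 sum_swap23)

lemma sum_rot3: "(\<Sum>p\<in>P. \<Sum>q\<in>Q. \<Sum>k\<in>K. f p q k) = (\<Sum>q\<in>Q. \<Sum>k\<in>K. \<Sum>p\<in>P. f p q k)"
  by (metis (no_types) sum_swap12 sum_swap23)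

lemma sum_mone_r: "a < n \<Longrightarrow> (\<Sum>m<n. f m * mone m a) = f a"
  by (simp add: mone_def if_distrib cong: if_cong)

lemma sum_mone_l: "a < n \<Longrightarrow> (\<Sum>m<n. mone a m * f m) = f a"
proof -
  assume "a < n"
  have "(\<Sum>m<n. mone a m * f m) = (\<Sum>m<n. if a = m then f m else 0)"
    by (rule sum.cong) (auto simp: mone_def)
  then show ?thesis using \<open>a < n\<close> by simp
qed

lemma sum_only: "a < (n::nat) \<Longrightarrow> (\<And>c. c < n \<Longrightarrow> c \<noteq> a \<Longrightarrow> f c = 0) \<Longrightarrow> (\<Sum>c<n. f c) = f a"
proof -
  assume a: "a < n" and z: "\<And>c. c < n \<Longrightarrow> c \<noteq> a \<Longrightarrow> f c = 0"
  have "(\<Sum>c<n. f c) = f a + sum f ({..<n} - {a})" using a by (intro sum.remove) auto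
  also have "sum f ({..<n} - {a}) = 0" using z by (intro sum.neutral) auto
  finally show ?thesis by simp
qed

lemma sum_two: "a < (n::nat) \<Longrightarrow> b < n \<Longrightarrow> a \<noteq> b \<Longrightarrow> (\<And>c. c < n \<Longrightarrow> c \<noteq> a \<Longrightarrow> c \<noteq> b \<Longrightarrow> f c = 0) \<Longrightarrow>
   (\<Sum>c<n. f c) = f a + f b"
proof -
  assume a: "a < n" and b: "b < n" and ab: "a \<noteq> b" and z: "\<And>c. c < n \<Longrightarrow> c \<noteq> a \<Longrightarrow> c \<noteq> b \<Longrightarrow> f c = 0"
  have "(\<Sum>c<n. f c) = f a + sum f ({..<n} - {a})" using a by (intro sum.remove) auto
  also have "sum f ({..<n} - {a}) = f b + sum f ({..<n} - {a} - {b})" using b ab by (intro sum.remove) auto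
  also have "sum f ({..<n} - {a} - {b}) = 0" using z by (intro sum.neutral) auto
  finally show ?thesis by simp
qed

lemma sform_selfadj:
  assumes "meq n (mmult n G A) (mmult n (madj A) G)"
  shows "sform n G (mvec n A x) y = sform n G x (mvec n A y)"
proof -
  have "sform n G (mvec n A x) y = (\<Sum>p<n. \<Sum>q<n. \<Sum>k<n. cnj (x k) * (cnj (A p k) * G p q) * y q)"
    by (simp add: sform_def mvec_def sum_distrib_left sum_distrib_right mult_ac)
  also have "\<dots> = (\<Sum>k<n. \<Sum>q<n. cnj (x k) * (\<Sum>p<n. cnj (A p k) * G p q) * y q)"
    by (subst sum_rev3) (simp add: sum_distrib_left sum_distrib_right)
  also have "\<dots> = (\<Sum>k<n. \<Sum>q<n. cnj (x k) * (\<Sum>p<n. G k p * A p q) * y q)"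
    using assms by (auto simp: meq_def mmult_def madj_def intro!: sum.cong)
  also have "\<dots> = sform n G x (mvec n A y)"
    apply (simp add: sform_def mvec_def sum_distrib_left sum_distrib_right mult_ac)
    by (subst sum_swap23, simp add: mult_ac)
  finally show ?thesis .
qed

lemma sform_lin2: "sform n X x (\<lambda>i. \<Sum>c\<in>C. f c * z c i) = (\<Sum>c\<in>C. f c * sform n X x (z c))"
  by (simp add: sform_def sum_distrib_left sum_distrib_right mult_ac sum.swap[of _ C])

lemma sform_lin1: "sform n X (\<lambda>i. \<Sum>c\<in>C. f c * z c i) y = (\<Sum>c\<in>C. cnj (f c) * sform n X (z c) y)"
  by (simp add: sform_def sum_distrib_left sum_distrib_right mult_ac sum.swap[of _ C])


definition colv :: "cmat \<Rightarrow> nat \<Rightarrow> cvec" where "colv S a = (\<lambda>i. S i a)"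

lemma sform_cong: "(\<And>i. i < n \<Longrightarrow> x i = x' i) \<Longrightarrow> (\<And>i. i < n \<Longrightarrow> y i = y' i) \<Longrightarrow>
   sform n X x y = sform n X x' y'"
  by (simp add: sform_def)

lemma posdef_col_nz:
  assumes pd: "pos_def n G" and QS: "\<forall>i<n. \<forall>j<n. (\<Sum>k<n. Q i k * S k j) = mone i j" and a: "a < n"
  shows "0 < Re (sform n G (colv S a) (colv S a))"
proof -
  have "\<exists>i<n. S i a \<noteq> 0"
  proof (rule ccontr)
    assume "\<not> ?thesis"
    then have "(\<Sum>k<n. Q a k * S k a) = 0" by simp
    with QS a show False by (auto simp: mone_def)
  qed
  with pd show ?thesis by (auto simp: pos_def_def quad_sform colv_def)
qed

lemma diag_exists:
  assumes pd: "pos_def n G" and sa: "meq n (mmult n G A) (mmult n (madj A) G)"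
  shows "\<exists>S Q d. (\<forall>i<n. \<forall>j<n. (\<Sum>k<n. S i k * Q k j) = mone i j) \<and>
                 (\<forall>i<n. \<forall>j<n. (\<Sum>k<n. Q i k * S k j) = mone i j) \<and>
                 (\<forall>i<n. \<forall>j<n. A i j = (\<Sum>l<n. S i l * of_real (d l) * Q l j))"
proof -
  have Ac: "mat n n (\<lambda>(i,j). A i j) \<in> carrier_mat n n" by auto
  from jnf_struct[OF Ac] obtain P J R where
    c: "P \<in> carrier_mat n n" "J \<in> carrier_mat n n" "R \<in> carrier_mat n n"
    and e: "P * R = 1\<^sub>m n" "R * P = 1\<^sub>m n" "mat n n (\<lambda>(i,j). A i j) = P * J * R"
    and st: "\<forall>i<n. \<forall>j<n. J $$ (i,j) \<noteq> 0 \<longrightarrow> i \<noteq> j \<longrightarrow> j = Suc i \<and> J $$ (i,i) = J $$ (j,j)"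
    by blast
  define S where "S = (\<lambda>i j. P $$ (i,j))"
  define Q where "Q = (\<lambda>i j. R $$ (i,j))"
  define Jm where "Jm = (\<lambda>i j. J $$ (i,j))"
  have SQ: "\<forall>i<n. \<forall>j<n. (\<Sum>k<n. S i k * Q k j) = mone i j"
  proof (intro allI impI)
    fix i j assume "i < n" "j < n"
    then show "(\<Sum>k<n. S i k * Q k j) = mone i j"
      using arg_cong[OF e(1), of "\<lambda>M. M $$ (i,j)"] mult_idx[OF c(1) c(3)]
      by (simp add: S_def Q_def mone_def)
  qed
  have QS: "\<forall>i<n. \<forall>j<n. (\<Sum>k<n. Q i k * S k j) = mone i j"
  proof (intro allI impI)
    fix i j assume "i < n" "j < n"
    then show "(\<Sum>k<n. Q i k * S k j) = mone i j"
      using arg_cong[OF e(2), of "\<lambda>M. M $$ (i,j)"] mult_idx[OF c(3) c(1)]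
      by (simp add: S_def Q_def mone_def)
  qed
  have PJ: "P * J \<in> carrier_mat n n" using c by auto
  have AJ: "\<forall>i<n. \<forall>j<n. A i j = (\<Sum>l<n. \<Sum>m<n. S i l * Jm l m * Q m j)"
  proof (intro allI impI)
    fix i j assume ij: "i < n" "j < n"
    have "A i j = (P * J * R) $$ (i,j)" using arg_cong[OF e(3), of "\<lambda>M. M $$ (i,j)"] ij by simp
    also have "\<dots> = (\<Sum>m<n. (\<Sum>l<n. S i l * Jm l m) * Q m j)"
      using mult_idx[OF PJ c(3) ij] mult_idx[OF c(1) c(2) ij(1)]
      by (simp add: S_def Q_def Jm_def)
    also have "\<dots> = (\<Sum>l<n. \<Sum>m<n. S i l * Jm l m * Q m j)"
      by (simp add: sum_distrib_right) (rule sum.swap)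
    finally show "A i j = (\<Sum>l<n. \<Sum>m<n. S i l * Jm l m * Q m j)" .
  qed
  have AS: "mvec n A (colv S a) i = (\<Sum>c<n. Jm c a * colv S c i)" if "i < n" "a < n" for i a
  proof -
    have "mvec n A (colv S a) i = (\<Sum>k<n. (\<Sum>l<n. \<Sum>m<n. S i l * Jm l m * Q m k) * S k a)"
      using AJ that by (simp add: mvec_def colv_def)
    also have "\<dots> = (\<Sum>k<n. \<Sum>l<n. \<Sum>m<n. S i l * Jm l m * (Q m k * S k a))"
      by (simp add: sum_distrib_right mult.assoc)
    also have "\<dots> = (\<Sum>l<n. \<Sum>m<n. S i l * Jm l m * (\<Sum>k<n. Q m k * S k a))"
      by (subst sum_rot3) (simp add: sum_distrib_left)
    also have "\<dots> = (\<Sum>l<n. \<Sum>m<n. S i l * Jm l m * mone m a)"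
      by (intro sum.cong refl) (use QS that in auto)
    also have "\<dots> = (\<Sum>l<n. S i l * Jm l a)"
      using that by (simp add: sum_mone_r)
    finally show ?thesis by (simp add: colv_def mult_ac)
  qed
  define K where "K = (\<lambda>a b. sform n G (colv S a) (colv S b))"
  have E: "(\<Sum>c<n. cnj (Jm c a) * K c b) = (\<Sum>c<n. Jm c b * K a c)" if "a < n" "b < n" for a b
  proof -
    have "(\<Sum>c<n. cnj (Jm c a) * K c b) = sform n G (\<lambda>i. \<Sum>c<n. Jm c a * colv S c i) (colv S b)"
      by (simp add: sform_lin1 K_def)
    also have "\<dots> = sform n G (mvec n A (colv S a)) (colv S b)"
      by (rule sform_cong) (use AS that in auto)
    also have "\<dots> = sform n G (colv S a) (mvec n A (colv S b))" by (rule sform_selfadj[OF sa])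
    also have "\<dots> = sform n G (colv S a) (\<lambda>i. \<Sum>c<n. Jm c b * colv S c i)"
      by (rule sform_cong) (use AS that in auto)
    also have "\<dots> = (\<Sum>c<n. Jm c b * K a c)"
      by (simp add: sform_lin2 K_def)
    finally show ?thesis .
  qed
  have Kpos: "K a a \<noteq> 0" if "a < n" for a
    using posdef_col_nz[OF pd QS that] by (auto simp: K_def)
  have diag: "Jm i j = 0" if "i < n" "j < n" "i \<noteq> j" for i j
  proof (rule ccontr)
    assume nz: "Jm i j \<noteq> 0"
    define bad where "bad = (\<lambda>j. 0 < j \<and> j < n \<and> Jm (j - 1) j \<noteq> 0)"
    from st[rule_format, of i j] nz that have "j = Suc i" by (simp add: Jm_def)
    then have "bad j" using nz that by (auto simp: bad_def)
    define j0 where "j0 = (LEAST j. bad j)"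
    have b0: "bad j0" unfolding j0_def by (rule LeastI[of bad j, OF \<open>bad j\<close>])
    have min: "\<not> bad k" if "k < j0" for k using not_less_Least[OF that[unfolded j0_def]] .
    define i0 where "i0 = j0 - 1"
    have j0p: "0 < j0" "j0 < n" using b0 unfolding bad_def by auto
    then have i0: "i0 < n" "j0 = Suc i0" "j0 < n" unfolding i0_def by auto
    have coli: "Jm c i0 = 0" if "c < n" "c \<noteq> i0" for c
    proof (rule ccontr)
      assume "Jm c i0 \<noteq> 0"
      with st[rule_format, of c i0] that i0 have "i0 = Suc c" by (simp add: Jm_def)
      with min[of i0] i0 \<open>Jm c i0 \<noteq> 0\<close> show False by (auto simp: bad_def)
    qed
    have colj: "Jm c j0 = 0" if "c < n" "c \<noteq> i0" "c \<noteq> j0" for c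
    proof (rule ccontr)
      assume "Jm c j0 \<noteq> 0"
      with st[rule_format, of c j0] that i0 have "j0 = Suc c" by (simp add: Jm_def)
      with i0 that show False by simp
    qed
    have "Jm (j0 - 1) j0 \<noteq> 0" using b0 unfolding bad_def by blast
    then have "Jm i0 j0 \<noteq> 0" unfolding i0_def .
    then have "J $$ (i0,j0) \<noteq> 0" unfolding Jm_def .
    moreover have "i0 \<noteq> j0" using i0(2) by simp
    ultimately have "j0 = Suc i0 \<and> J $$ (i0,i0) = J $$ (j0,j0)" using st i0(1) i0(3) by blast
    then have eqd: "Jm j0 j0 = Jm i0 i0" unfolding Jm_def by simp
    have s1: "(\<Sum>c<n. cnj (Jm c i0) * K c i0) = cnj (Jm i0 i0) * K i0 i0"
      by (rule sum_only) (use coli i0 in auto)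
    have s2: "(\<Sum>c<n. Jm c i0 * K i0 c) = Jm i0 i0 * K i0 i0"
      by (rule sum_only) (use coli i0 in auto)
    from E[OF i0(1) i0(1)] s1 s2 have "cnj (Jm i0 i0) * K i0 i0 = Jm i0 i0 * K i0 i0"
      by simp
    with Kpos[OF i0(1)] have lam: "cnj (Jm i0 i0) = Jm i0 i0" by simp
    have s3: "(\<Sum>c<n. cnj (Jm c i0) * K c j0) = cnj (Jm i0 i0) * K i0 j0"
      by (rule sum_only) (use coli i0 in auto)
    have s4: "(\<Sum>c<n. Jm c j0 * K i0 c) = Jm i0 j0 * K i0 i0 + Jm j0 j0 * K i0 j0"
      by (rule sum_two) (use colj i0 in auto)
    from E[OF i0(1) i0(3)] s3 s4 lam eqd have "Jm i0 j0 * K i0 i0 = 0"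
      by simp
    with Kpos[OF i0(1)] b0 i0 show False by (simp add: bad_def)
  qed
  have real: "Jm a a = of_real (Re (Jm a a))" if "a < n" for a
  proof -
    have s1: "(\<Sum>c<n. cnj (Jm c a) * K c a) = cnj (Jm a a) * K a a"
      by (rule sum_only) (use diag that in auto)
    have s2: "(\<Sum>c<n. Jm c a * K a c) = Jm a a * K a a"
      by (rule sum_only) (use diag that in auto)
    from E[OF that that] s1 s2 have "cnj (Jm a a) * K a a = Jm a a * K a a"
      by simp
    with Kpos[OF that] have "cnj (Jm a a) = Jm a a" by simp
    then show ?thesis by (simp add: complex_eq_iff)
  qed
  define d where "d = (\<lambda>l. Re (Jm l l))"
  have AD: "\<forall>i<n. \<forall>j<n. A i j = (\<Sum>l<n. S i l * of_real (d l) * Q l j)"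
  proof (intro allI impI)
    fix i j assume ij: "i < n" "j < n"
    have "A i j = (\<Sum>l<n. \<Sum>m<n. S i l * Jm l m * Q m j)" using AJ ij by simp
    also have "\<dots> = (\<Sum>l<n. S i l * Jm l l * Q l j)"
      by (intro sum.cong refl sum_only) (use diag in auto)
    also have "\<dots> = (\<Sum>l<n. S i l * of_real (d l) * Q l j)"
      by (intro sum.cong refl) (use real in \<open>auto simp: d_def\<close>)
    finally show "A i j = (\<Sum>l<n. S i l * of_real (d l) * Q l j)" .
  qed
  show ?thesis using SQ QS AD by blast
qed


lemma mpow_diag:
  assumes SQ: "\<forall>i<n. \<forall>j<n. (\<Sum>k<n. S i k * Q k j) = mone i j"
      and QS: "\<forall>i<n. \<forall>j<n. (\<Sum>k<n. Q i k * S k j) = mone i j"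
      and X: "\<forall>i<n. \<forall>j<n. X i j = (\<Sum>l<n. S i l * e l * Q l j)"
  shows "\<forall>i<n. \<forall>j<n. mpow n X k i j = (\<Sum>l<n. S i l * e l ^ k * Q l j)"
proof (induction k)
  case 0
  then show ?case using SQ by simp
next
  case (Suc k)
  show ?case
  proof (intro allI impI)
    fix i j assume ij: "i < n" "j < n"
    have "mpow n X (Suc k) i j = (\<Sum>m<n. (\<Sum>l<n. S i l * e l * Q l m) * (\<Sum>p<n. S m p * e p ^ k * Q p j))"
      using Suc X ij by (simp add: mmult_def)
    also have "\<dots> = (\<Sum>m<n. \<Sum>l<n. \<Sum>p<n. (S i l * e l) * (Q l m * S m p) * (e p ^ k * Q p j))"
      by (simp add: sum_product mult_ac)
    also have "\<dots> = (\<Sum>l<n. \<Sum>p<n. (S i l * e l) * (\<Sum>m<n. Q l m * S m p) * (e p ^ k * Q p j))"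
      by (subst sum_rot3) (simp add: sum_distrib_left sum_distrib_right)
    also have "\<dots> = (\<Sum>l<n. \<Sum>p<n. (S i l * e l) * mone l p * (e p ^ k * Q p j))"
      by (intro sum.cong refl) (use QS in auto)
    also have "\<dots> = (\<Sum>l<n. S i l * e l * (e l ^ k * Q l j))"
    proof (intro sum.cong refl)
      fix l assume "l \<in> {..<n}"
      then show "(\<Sum>p<n. S i l * e l * mone l p * (e p ^ k * Q p j)) = S i l * e l * (e l ^ k * Q l j)"
        using sum_mone_l[of l n "\<lambda>p. S i l * e l * (e p ^ k * Q p j)"]
        by (simp add: mult_ac)
    qed
    finally show "mpow n X (Suc k) i j = (\<Sum>l<n. S i l * e l ^ Suc k * Q l j)"
      by (simp add: mult_ac)
  qed
qed

lemma mexp_diag: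
  assumes SQ: "\<forall>i<n. \<forall>j<n. (\<Sum>k<n. S i k * Q k j) = mone i j"
      and QS: "\<forall>i<n. \<forall>j<n. (\<Sum>k<n. Q i k * S k j) = mone i j"
      and X: "\<forall>i<n. \<forall>j<n. X i j = (\<Sum>l<n. S i l * e l * Q l j)"
      and ij: "i < n" "j < n"
  shows "mexp n (msmult c X) i j = (\<Sum>l<n. S i l * exp (c * e l) * Q l j)"
proof -
  have X': "\<forall>i<n. \<forall>j<n. msmult c X i j = (\<Sum>l<n. S i l * (c * e l) * Q l j)"
    using X by (simp add: msmult_def sum_distrib_left mult_ac)
  note P = mpow_diag[OF SQ QS X']
  have s: "(\<lambda>k. \<Sum>l<n. S i l * Q l j * ((c * e l) ^ k /\<^sub>R fact k)) sums (\<Sum>l<n. S i l * Q l j * exp (c * e l))"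
    by (intro sums_sum sums_mult exp_converges)
  have eq: "(\<Sum>l<n. S i l * Q l j * ((c * e l) ^ k /\<^sub>R fact k)) = mpow n (msmult c X) k i j / of_nat (fact k)" for k
    using P ij by (simp add: sum_divide_distrib scaleR_conv_of_real field_simps)
  from s have "(\<lambda>k. mpow n (msmult c X) k i j / of_nat (fact k)) sums (\<Sum>l<n. S i l * Q l j * exp (c * e l))"
    by (simp only: eq)
  then show ?thesis unfolding mexp_def by (simp add: sums_iff mult_ac)
qed

lemma sform_mmult_r: "sform n (mmult n Z P) x y = sform n Z x (mvec n P y)"
proof -
  have "sform n (mmult n Z P) x y = (\<Sum>i<n. \<Sum>j<n. \<Sum>k<n. cnj (x i) * Z i k * (P k j * y j))"
    by (simp add: sform_def mmult_def sum_distrib_left sum_distrib_right mult_ac)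
  also have "\<dots> = (\<Sum>i<n. \<Sum>k<n. \<Sum>j<n. cnj (x i) * Z i k * (P k j * y j))"
    by (rule sum_swap23)
  also have "\<dots> = sform n Z x (mvec n P y)"
    by (simp add: sform_def mvec_def sum_distrib_left)
  finally show ?thesis .
qed

lemma sform_mmult_l: "sform n (mmult n (madj P) Z) x y = sform n Z (mvec n P x) y"
proof -
  have "sform n (mmult n (madj P) Z) x y = (\<Sum>i<n. \<Sum>j<n. \<Sum>k<n. (cnj (x i) * cnj (P k i)) * Z k j * y j)"
    by (simp add: sform_def mmult_def madj_def sum_distrib_left sum_distrib_right mult_ac)
  also have "\<dots> = (\<Sum>k<n. \<Sum>j<n. \<Sum>i<n. (cnj (x i) * cnj (P k i)) * Z k j * y j)"
    by (rule sum_rev3)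
  also have "\<dots> = sform n Z (mvec n P x) y"
    by (simp add: sform_def mvec_def sum_distrib_left sum_distrib_right cnj_sum mult_ac)
  finally show ?thesis .
qed

lemma mmult3_sform: "mmult n E1 (mmult n X E2) i j = sform n X (\<lambda>m. cnj (E1 i m)) (\<lambda>p. E2 p j)"
  by (simp add: sform_def mmult_def sum_distrib_left mult_ac)

lemma sform_herm:
  assumes "hermitian n X" shows "sform n X x y = cnj (sform n X y x)"
proof -
  have h: "X i j = cnj (X j i)" if "i < n" "j < n" for i j
    using assms that unfolding hermitian_def meq_def madj_def by blast
  have "sform n X x y = (\<Sum>i<n. \<Sum>j<n. cnj (x i) * cnj (X j i) * y j)"
    unfolding sform_def by (rule sum.cong[OF refl], rule sum.cong[OF refl]) (subst h, auto)
  also have "\<dots> = (\<Sum>j<n. \<Sum>i<n. cnj (x i) * cnj (X j i) * y j)"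
    by (rule sum.swap)
  also have "\<dots> = cnj (sform n X y x)"
    unfolding sform_def cnj_sum complex_cnj_mult complex_cnj_cnj
    by (rule sum.cong[OF refl], rule sum.cong[OF refl]) (simp only: mult.commute mult.left_commute)
  finally show ?thesis .
qed

lemma int_exp:
  fixes x T :: real assumes T: "T > 0"
  shows "((\<lambda>t. exp (\<i> * of_real t * of_real x)) has_integral
           (if x = 0 then of_real (2*T)
            else (exp (\<i> * of_real T * of_real x) - exp (\<i> * of_real (-T) * of_real x)) / (\<i> * of_real x))) {-T..T}"
proof (cases "x = 0")
  case True
  have "((\<lambda>t. 1::complex) has_integral (Henstock_Kurzweil_Integration.content {-T..T}) *\<^sub>R 1) {-T..T}"
    by (rule has_integral_const_real)
  then show ?thesis using True T by (simp add: scaleR_conv_of_real content_real)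
next
  case False
  let ?F = "\<lambda>z::complex. exp (\<i> * z * of_real x) / (\<i> * of_real x)"
  have d: "(?F has_field_derivative exp (\<i> * of_real t * of_real x)) (at (of_real t))" for t :: real
  proof -
    have "(?F has_field_derivative exp (\<i> * of_real t * of_real x) * (\<i> * of_real x) / (\<i> * of_real x)) (at (of_real t))"
      by (auto intro!: derivative_eq_intros)
    then show ?thesis using False by simp
  qed
  have "((\<lambda>t. exp (\<i> * of_real t * of_real x)) has_integral (?F (of_real T) - ?F (of_real (-T)))) {-T..T}"
    by (rule fundamental_theorem_of_calculus) (use T has_vector_derivative_real_field[OF d] in auto)
  then show ?thesis using False by (simp add: diff_divide_distrib)
qed

lemma avg_lim:
  fixes x :: real
  shows "((\<lambda>T. of_real (1/(2*T)) * integral {-T..T} (\<lambda>t. exp (\<i> * of_real t * of_real x)))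
           \<longlongrightarrow> (if x = 0 then 1 else 0)) at_top"
proof (cases "x = 0")
  case True
  have ev: "\<forall>\<^sub>F T in at_top. of_real (1/(2*T)) * integral {-T..T} (\<lambda>t. exp (\<i> * of_real t * of_real x)) = (1::complex)"
    using eventually_gt_at_top[of 0]
  proof eventually_elim
    case (elim T)
    from integral_unique[OF int_exp[OF elim, of x]] True elim show ?case
      by (simp add: field_simps)
  qed
  show ?thesis unfolding if_P[OF True] by (rule tendsto_eventually[OF ev])
next
  case False
  have ev: "\<forall>\<^sub>F T in at_top. norm (of_real (1/(2*T)) * integral {-T..T} (\<lambda>t. exp (\<i> * of_real t * of_real x))) \<le> (1/\<bar>x\<bar>) * (1/T)"
    using eventually_gt_at_top[of 0]
  proof eventually_elim
    case (elim T)
    let ?e1 = "exp (\<i> * of_real T * of_real x)" and ?e2 = "exp (\<i> * of_real (-T) * of_real x)"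
    have n1: "norm ?e1 = 1" by (simp add: norm_exp_eq_Re)
    have n2: "norm ?e2 = 1" by (simp add: norm_exp_eq_Re)
    have "norm (?e1 - ?e2) \<le> 2" using norm_triangle_ineq4[of ?e1 ?e2] n1 n2 by simp
    then have "norm ((?e1 - ?e2) / (\<i> * of_real x)) \<le> 2 / \<bar>x\<bar>"
      using False by (simp add: norm_divide norm_mult divide_right_mono)
    then have "\<bar>1/(2*T)\<bar> * norm ((?e1 - ?e2) / (\<i> * of_real x)) \<le> \<bar>1/(2*T)\<bar> * (2 / \<bar>x\<bar>)"
      by (rule mult_left_mono) simp
    then have "norm (of_real (1/(2*T)) * ((?e1 - ?e2) / (\<i> * of_real x))) \<le> (1/\<bar>x\<bar>) * (1/T)"
      using elim False by (simp only: norm_mult norm_of_real) (simp add: field_simps)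
    moreover have "integral {-T..T} (\<lambda>t. exp (\<i> * of_real t * of_real x)) = (?e1 - ?e2) / (\<i> * of_real x)"
      using integral_unique[OF int_exp[OF elim, of x]] False by simp
    ultimately show ?case by simp
  qed
  have "((\<lambda>T. (1/\<bar>x\<bar>) * (1/T)) \<longlongrightarrow> (1/\<bar>x\<bar>) * 0) at_top"
    by (intro tendsto_mult tendsto_const tendsto_divide_0[OF tendsto_const] filterlim_at_top_imp_at_infinity[OF filterlim_ident])
  then have "((\<lambda>T. (1/\<bar>x\<bar>) * (1/T)) \<longlongrightarrow> 0) at_top" by simp
  from Lim_null_comparison[OF ev this] False show ?thesis by simp
qed


lemma mvec_colv: "mvec n S y = (\<lambda>i. \<Sum>a<n. y a * colv S a i)"
  by (simp add: mvec_def colv_def mult.commute)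

lemma sform_S: "sform n X (mvec n S y) (mvec n S z) =
   (\<Sum>a<n. \<Sum>b<n. cnj (y a) * sform n X (colv S a) (colv S b) * z b)"
  unfolding mvec_colv sform_lin1 sform_lin2 by (simp add: sum_distrib_left mult_ac)

lemma quad_msub: "quad n (msub X Y) v = quad n X v - quad n Y v"
  by (simp add: quad_def msub_def algebra_simps sum_subtractf)

lemma quad_add_smult: "quad n (\<lambda>i j. X i j + c * Y i j) v = quad n X v + c * quad n Y v"
  by (simp add: quad_def algebra_simps sum.distrib sum_distrib_left)

lemma quad_msmult: "quad n (msmult c Y) v = c * quad n Y v"
  by (simp add: quad_def msmult_def sum_distrib_left mult_ac)

lemma sform_cong_mat: "(\<And>i j. i < n \<Longrightarrow> j < n \<Longrightarrow> X i j = X' i j) \<Longrightarrow> sform n X x y = sform n X' x y"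
  by (simp add: sform_def)

lemma class_sum:
  fixes d :: "nat \<Rightarrow> real"
  shows "(\<Sum>c\<in>d`{..<n}. \<Sum>a<n. \<Sum>b<n. if d a = c \<and> d b = c then f a b else 0) =
         (\<Sum>a<n. \<Sum>b<n. if d a = d b then f a b else 0)"
proof -
  have "(\<Sum>c\<in>d`{..<n}. \<Sum>a<n. \<Sum>b<n. if d a = c \<and> d b = c then f a b else 0) =
        (\<Sum>a<n. \<Sum>b<n. \<Sum>c\<in>d`{..<n}. if d a = c \<and> d b = c then f a b else 0)"
    by (rule sum_rot3)
  also have "\<dots> = (\<Sum>a<n. \<Sum>b<n. if d a = d b then f a b else 0)"
  proof (intro sum.cong refl)
    fix a b assume a: "a \<in> {..<n}"
    have "(\<Sum>c\<in>d`{..<n}. if d a = c \<and> d b = c then f a b else 0) =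
          (\<Sum>c\<in>d`{..<n}. if d a = c then (if d a = d b then f a b else 0) else 0)"
      by (rule sum.cong) auto
    also have "\<dots> = (if d a = d b then f a b else 0)" using a by (simp add: sum.delta)
    finally show "(\<Sum>c\<in>d`{..<n}. if d a = c \<and> d b = c then f a b else 0) = (if d a = d b then f a b else 0)" .
  qed
  finally show ?thesis .
qed

definition res :: "(nat \<Rightarrow> real) \<Rightarrow> real \<Rightarrow> cvec \<Rightarrow> cvec" where
  "res d c y = (\<lambda>a. if d a = c then y a else 0)"

definition bform :: "nat \<Rightarrow> cmat \<Rightarrow> cvec \<Rightarrow> complex" where
  "bform n M y = (\<Sum>a<n. \<Sum>b<n. cnj (y a) * M a b * y b)"

lemma bform_res: "bform n M (res d c y) = (\<Sum>a<n. \<Sum>b<n. if d a = c \<and> d b = c then cnj (y a) * M a b * y b else 0)"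
  unfolding bform_def res_def by (rule sum.cong[OF refl], rule sum.cong[OF refl]) auto

lemma bform_classes:
  fixes d :: "nat \<Rightarrow> real"
  shows "(\<Sum>c\<in>d`{..<n}. bform n M (res d c y)) = (\<Sum>a<n. \<Sum>b<n. if d a = d b then cnj (y a) * M a b * y b else 0)"
  unfolding bform_res by (rule class_sum)

lemma bform_classes_block:
  fixes d :: "nat \<Rightarrow> real"
  assumes "\<And>a b. a < n \<Longrightarrow> b < n \<Longrightarrow> d a \<noteq> d b \<Longrightarrow> M a b = 0"
  shows "(\<Sum>c\<in>d`{..<n}. bform n M (res d c y)) = bform n M y"
proof -
  have "(\<Sum>c\<in>d`{..<n}. bform n M (res d c y)) = (\<Sum>a<n. \<Sum>b<n. if d a = d b then cnj (y a) * M a b * y b else 0)"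
    by (rule bform_classes)
  also have "\<dots> = bform n M y" unfolding bform_def
    by (rule sum.cong[OF refl], rule sum.cong[OF refl]) (use assms in auto)
  finally show ?thesis .
qed

lemma bform_scale: "bform n M (\<lambda>a. of_real c * y a) = of_real (c^2) * bform n M y"
  by (simp add: bform_def sum_distrib_left power2_eq_square mult_ac)

lemma sum_Re: "Re (\<Sum>c\<in>C. f c) = (\<Sum>c\<in>C. Re (f c))"
  by (rule Re_sum)


lemma avg_sum_lim:
  fixes x :: "nat \<Rightarrow> nat \<Rightarrow> real"
  assumes f: "\<And>t. f t = (\<Sum>a<n. \<Sum>b<n. c a b * exp (\<i> * of_real t * of_real (x a b)))"
  shows "((\<lambda>T. of_real (1/(2*T)) * integral {-T..T} f) \<longlongrightarrow>
           (\<Sum>a<n. \<Sum>b<n. c a b * (if x a b = 0 then 1 else 0))) at_top"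
proof -
  let ?I = "\<lambda>y T. integral {-T..T} (\<lambda>t. exp (\<i> * of_real t * of_real y))"
  have ev: "\<forall>\<^sub>F T in at_top. (\<Sum>a<n. \<Sum>b<n. c a b * (of_real (1/(2*T)) * ?I (x a b) T)) =
                               of_real (1/(2*T)) * integral {-T..T} f"
    using eventually_gt_at_top[of 0]
  proof eventually_elim
    case (elim T)
    have hi: "((\<lambda>t. exp (\<i> * of_real t * of_real y)) has_integral ?I y T) {-T..T}" for y
      using int_exp[OF elim, of y] by (rule has_integral_integrable[THEN integrable_integral])
    have "(f has_integral (\<Sum>a<n. \<Sum>b<n. c a b * ?I (x a b) T)) {-T..T}"
      unfolding f[abs_def]
      by (intro has_integral_sum finite_lessThan has_integral_mult_right hi)
    then have "integral {-T..T} f = (\<Sum>a<n. \<Sum>b<n. c a b * ?I (x a b) T)" by (rule integral_unique)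
    then show ?case by (simp add: sum_distrib_left mult_ac)
  qed
  have "((\<lambda>T. \<Sum>a<n. \<Sum>b<n. c a b * (of_real (1/(2*T)) * ?I (x a b) T)) \<longlongrightarrow>
           (\<Sum>a<n. \<Sum>b<n. c a b * (if x a b = 0 then 1 else 0))) at_top"
    by (intro tendsto_sum tendsto_mult tendsto_const avg_lim)
  then show ?thesis by (rule Lim_transform_eventually[OF _ ev])
qed

lemma sform_scale1: "sform n X (\<lambda>i. c * x i) y = cnj c * sform n X x y"
  by (simp add: sform_def sum_distrib_left mult_ac)

lemma sform_scale2: "sform n X x (\<lambda>i. c * y i) = c * sform n X x y"
  by (simp add: sform_def sum_distrib_left mult_ac)

lemma integrand_formula:
  fixes d :: "nat \<Rightarrow> real"
  assumes SQ: "\<forall>i<n. \<forall>j<n. (\<Sum>k<n. S i k * Q k j) = mone i j"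
      and QS: "\<forall>i<n. \<forall>j<n. (\<Sum>k<n. Q i k * S k j) = mone i j"
      and AD: "\<forall>i<n. \<forall>j<n. A i j = (\<Sum>l<n. S i l * of_real (d l) * Q l j)"
      and ij: "i < n" "j < n"
  shows "integrand n G A B t i j = (\<Sum>a<n. \<Sum>b<n. (cnj (Q a i) * sform n (mmult n G B) (colv S a) (colv S b) * Q b j)
            * exp (\<i> * of_real t * of_real (d a - d b)))"
proof -
  have madjA: "\<forall>i<n. \<forall>j<n. madj A i j = (\<Sum>l<n. madj Q i l * of_real (d l) * madj S l j)"
    using AD by (simp add: madj_def cnj_sum mult_ac)
  have SQ': "\<forall>i<n. \<forall>j<n. (\<Sum>k<n. madj Q i k * madj S k j) = mone i j"
  proof (intro allI impI)
    fix i j assume "i < n" "j < n"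
    then have "(\<Sum>k<n. S j k * Q k i) = mone j i" using SQ by blast
    then have "cnj (\<Sum>k<n. S j k * Q k i) = mone i j" by (simp add: mone_def)
    then show "(\<Sum>k<n. madj Q i k * madj S k j) = mone i j" by (simp add: madj_def cnj_sum mult_ac)
  qed
  have QS': "\<forall>i<n. \<forall>j<n. (\<Sum>k<n. madj S i k * madj Q k j) = mone i j"
  proof (intro allI impI)
    fix i j assume "i < n" "j < n"
    then have "(\<Sum>k<n. Q j k * S k i) = mone j i" using QS by blast
    then have "cnj (\<Sum>k<n. Q j k * S k i) = mone i j" by (simp add: mone_def)
    then show "(\<Sum>k<n. madj S i k * madj Q k j) = mone i j" by (simp add: madj_def cnj_sum mult_ac)
  qed
  let ?E1 = "mexp n (msmult (\<i> * of_real t) (madj A))"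
  let ?E2 = "mexp n (msmult (- \<i> * of_real t) A)"
  let ?e = "\<lambda>a. exp (\<i> * of_real t * of_real (d a))"
  let ?e' = "\<lambda>b. exp (- \<i> * of_real t * of_real (d b))"
  have E1: "?E1 i m = (\<Sum>l<n. madj Q i l * ?e l * madj S l m)" if "m < n" for m
    using mexp_diag[OF SQ' QS' madjA ij(1) that] .
  have E2: "?E2 p j = (\<Sum>l<n. S p l * ?e' l * Q l j)" if "p < n" for p
    using mexp_diag[OF SQ QS AD that ij(2)] .
  have "integrand n G A B t i j = sform n (mmult n G B) (\<lambda>m. cnj (?E1 i m)) (\<lambda>p. ?E2 p j)"
    unfolding integrand_def by (rule mmult3_sform)
  also have "\<dots> = sform n (mmult n G B) (\<lambda>m. \<Sum>a<n. (Q a i * cnj (?e a)) * colv S a m)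
                                       (\<lambda>p. \<Sum>b<n. (?e' b * Q b j) * colv S b p)"
    apply (rule sform_cong)
     apply (subst E1, assumption)
     apply (simp add: cnj_sum madj_def colv_def mult_ac)
    apply (subst E2, assumption)
    by (simp add: colv_def mult_ac)
  also have "\<dots> = (\<Sum>a<n. \<Sum>b<n. (cnj (Q a i) * sform n (mmult n G B) (colv S a) (colv S b) * Q b j)
            * (?e a * ?e' b))"
    unfolding sform_lin1 sform_lin2 by (simp add: sum_distrib_left mult_ac)
  also have "\<dots> = (\<Sum>a<n. \<Sum>b<n. (cnj (Q a i) * sform n (mmult n G B) (colv S a) (colv S b) * Q b j)
            * exp (\<i> * of_real t * of_real (d a - d b)))"
    by (simp add: exp_add[symmetric] algebra_simps)
  finally show ?thesis .
qed


lemma main_inst: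
  fixes \<alpha> \<beta> CA \<delta> :: real and n :: nat and G A B :: cmat
  assumes \<alpha>: "\<alpha> > 0" and \<beta>: "\<beta> > 0" and \<delta>def: "\<delta> = \<beta> / (1 + CA\<^sup>2 / \<alpha>\<^sup>2)"
  and pd: "pos_def n G" and sa: "meq n (mmult n G A) (mmult n (madj A) G)"
  and pB: "psd n (mmult n G B)" and nA: "opnorm_G n G A \<le> CA"
  and hyp: "loewner_ge n (\<lambda>i j. mmult n G B i j
                       + complex_of_real (1 / \<alpha>\<^sup>2) * mmult n (mmult n (mmult n (madj A) G) B) A i j)
                  (msmult (complex_of_real \<beta>) G)"
  shows "\<exists>L. (\<forall>i<n. \<forall>j<n. ((\<lambda>T. time_avg n G A B T i j) \<longlongrightarrow> L i j) at_top)
              \<and> loewner_ge n L (msmult (complex_of_real \<delta>) G)"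
proof -
  obtain S Q and d :: "nat \<Rightarrow> real" where
    SQ: "\<forall>i<n. \<forall>j<n. (\<Sum>k<n. S i k * Q k j) = mone i j" and
    QS: "\<forall>i<n. \<forall>j<n. (\<Sum>k<n. Q i k * S k j) = mone i j" and
    AD: "\<forall>i<n. \<forall>j<n. A i j = (\<Sum>l<n. S i l * of_real (d l) * Q l j)"
    using diag_exists[OF pd sa] by blast
  define GB where "GB = mmult n G B"
  define M where "M = (\<lambda>a b. sform n GB (colv S a) (colv S b))"
  define K where "K = (\<lambda>a b. sform n G (colv S a) (colv S b))"
  define L where "L = (\<lambda>i j. \<Sum>a<n. \<Sum>b<n. cnj (Q a i) * M a b * Q b j * (if d a - d b = 0 then 1 else 0))"
  have AScol: "(\<Sum>k<n. A i k * S k a) = S i a * of_real (d a)" if "i < n" "a < n" for i a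
  proof -
    have "(\<Sum>k<n. A i k * S k a) = (\<Sum>k<n. \<Sum>l<n. S i l * of_real (d l) * (Q l k * S k a))"
      using AD that by (simp add: sum_distrib_right mult.assoc)
    also have "\<dots> = (\<Sum>l<n. S i l * of_real (d l) * (\<Sum>k<n. Q l k * S k a))"
      by (subst sum.swap) (simp add: sum_distrib_left)
    also have "\<dots> = (\<Sum>l<n. S i l * of_real (d l) * mone l a)"
      by (intro sum.cong refl) (use QS that in auto)
    also have "\<dots> = S i a * of_real (d a)" using that by (simp add: sum_mone_r)
    finally show ?thesis .
  qed
  have AS: "mvec n A (mvec n S y) i = mvec n S (\<lambda>a. of_real (d a) * y a) i" if "i < n" for y i
  proof -
    have "mvec n A (mvec n S y) i = (\<Sum>k<n. \<Sum>a<n. A i k * S k a * y a)"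
      by (simp add: mvec_def sum_distrib_left mult.assoc)
    also have "\<dots> = (\<Sum>a<n. (\<Sum>k<n. A i k * S k a) * y a)"
      by (subst sum.swap) (simp add: sum_distrib_right)
    also have "\<dots> = (\<Sum>a<n. S i a * of_real (d a) * y a)"
      by (intro sum.cong refl) (use AScol that in auto)
    finally show ?thesis by (simp add: mvec_def mult_ac)
  qed
  have vrep: "v i = mvec n S (mvec n Q v) i" if "i < n" for v i
  proof -
    have "mvec n S (mvec n Q v) i = (\<Sum>a<n. \<Sum>j<n. S i a * Q a j * v j)"
      by (simp add: mvec_def sum_distrib_left mult.assoc)
    also have "\<dots> = (\<Sum>j<n. (\<Sum>a<n. S i a * Q a j) * v j)"
      by (subst sum.swap) (simp add: sum_distrib_right)
    also have "\<dots> = (\<Sum>j<n. mone i j * v j)"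
      by (intro sum.cong refl) (use SQ that in auto)
    also have "\<dots> = v i" using that by (simp add: sum_mone_l)
    finally show ?thesis by simp
  qed
  have quadS: "quad n X (mvec n S y) = bform n (\<lambda>a b. sform n X (colv S a) (colv S b)) y" for X y
    unfolding quad_sform sform_S bform_def ..
  have quadGv: "quad n G v = bform n K (mvec n Q v)" for v
  proof -
    have "quad n G v = quad n G (mvec n S (mvec n Q v))"
      unfolding quad_sform by (rule sform_cong) (use vrep in auto)
    then show ?thesis unfolding quadS K_def .
  qed
  have Acol: "mvec n A (colv S a) i = of_real (d a) * colv S a i" if "i < n" "a < n" for a i
    using AScol[OF that] by (simp add: mvec_def colv_def mult.commute)
  have Kblock: "K a b = 0" if "a < n" "b < n" "d a \<noteq> d b" for a b
  proof -
    have "sform n G (mvec n A (colv S a)) (colv S b) = sform n G (colv S a) (mvec n A (colv S b))"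
      by (rule sform_selfadj[OF sa])
    moreover have "sform n G (mvec n A (colv S a)) (colv S b) = of_real (d a) * K a b"
      using sform_cong[of n "mvec n A (colv S a)" "\<lambda>i. of_real (d a) * colv S a i" "colv S b" "colv S b" G]
        Acol that by (simp add: sform_scale1 K_def)
    moreover have "sform n G (colv S a) (mvec n A (colv S b)) = of_real (d b) * K a b"
      using sform_cong[of n "colv S a" "colv S a" "mvec n A (colv S b)" "\<lambda>i. of_real (d b) * colv S b i" G]
        Acol that by (simp add: sform_scale2 K_def)
    ultimately have "(of_real (d a) - of_real (d b)) * K a b = 0" by (simp add: algebra_simps)
    with that show ?thesis by simp
  qed
  have quad_nn: "0 \<le> Re (quad n G v)" for v
  proof (cases "\<exists>i<n. v i \<noteq> 0")
    case True then show ?thesis using pd by (auto simp: pos_def_def intro: less_imp_le)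
  next
    case False then have "quad n G v = 0" by (auto simp: quad_def intro!: sum.neutral)
    then show ?thesis by simp
  qed
  have bK_nn: "0 \<le> Re (bform n K y)" for y
    using quad_nn[of "mvec n S y"] unfolding quadS K_def .
  have bM_nn: "0 \<le> Re (bform n M y)" for y
  proof -
    have "quad n GB (mvec n S y) = bform n M y" unfolding quadS M_def ..
    moreover have "0 \<le> Re (quad n GB (mvec n S y))" using pB unfolding psd_def GB_def by blast
    ultimately show ?thesis by simp
  qed
  have bform_sform: "bform n X y = sform n X y y" for X y by (simp add: bform_def sform_def)
  have res_D: "res d c (\<lambda>a. of_real (d a) * y a) = (\<lambda>a. of_real c * res d c y a)" for c y
    by (auto simp: res_def)
  have Av: "mvec n A v i = mvec n S (\<lambda>a. of_real (d a) * mvec n Q v a) i" if "i < n" for v i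
  proof -
    have "mvec n A v i = mvec n A (mvec n S (mvec n Q v)) i"
      unfolding mvec_def[of n A] by (intro sum.cong refl) (metis lessThan_iff vrep)
    then show ?thesis using AS[OF that] by simp
  qed
  define m where "m = Max (insert 0 ((\<lambda>a. \<bar>d a\<bar>) ` {..<n}))"
  have m_ge: "\<bar>d a\<bar> \<le> m" if "a < n" for a unfolding m_def using that by (intro Max_ge) auto
  have m0: "0 \<le> m" unfolding m_def by (intro Max_ge) auto
  have quadAv: "Re (quad n G (mvec n A v)) \<le> m\<^sup>2 * Re (quad n G v)" for v
  proof -
    let ?w = "mvec n Q v"
    let ?D = "d ` {..<n}"
    have "quad n G (mvec n A v) = quad n G (mvec n S (\<lambda>a. of_real (d a) * ?w a))"
      unfolding quad_sform by (rule sform_cong) (use Av in auto)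
    also have "\<dots> = bform n K (\<lambda>a. of_real (d a) * ?w a)" unfolding quadS K_def ..
    also have "\<dots> = (\<Sum>c\<in>?D. bform n K (res d c (\<lambda>a. of_real (d a) * ?w a)))"
      by (rule bform_classes_block[symmetric]) (use Kblock in auto)
    also have "\<dots> = (\<Sum>c\<in>?D. of_real (c\<^sup>2) * bform n K (res d c ?w))"
      unfolding res_D bform_scale ..
    finally have "Re (quad n G (mvec n A v)) = (\<Sum>c\<in>?D. c\<^sup>2 * Re (bform n K (res d c ?w)))"
      by (simp add: Re_sum)
    also have "\<dots> \<le> (\<Sum>c\<in>?D. m\<^sup>2 * Re (bform n K (res d c ?w)))"
    proof (rule sum_mono)
      fix c assume "c \<in> ?D"
      then obtain a where a: "a < n" "c = d a" by auto
      have "\<bar>c\<bar> \<le> m" using m_ge[OF a(1)] a(2) by simp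
      then have "\<bar>c\<bar>^2 \<le> m^2" by (rule power_mono) simp
      then have "c\<^sup>2 \<le> m\<^sup>2" by simp
      then show "c\<^sup>2 * Re (bform n K (res d c ?w)) \<le> m\<^sup>2 * Re (bform n K (res d c ?w))"
        using bK_nn by (rule mult_right_mono)
    qed
    also have "\<dots> = m\<^sup>2 * Re (\<Sum>c\<in>?D. bform n K (res d c ?w))"
      by (simp add: Re_sum sum_distrib_left)
    also have "(\<Sum>c\<in>?D. bform n K (res d c ?w)) = bform n K ?w"
      by (rule bform_classes_block) (use Kblock in auto)
    also have "bform n K ?w = quad n G v" using quadGv by simp
    finally show ?thesis .
  qed
  define Rset where "Rset = {gnorm n G (mvec n A v) / gnorm n G v |v. gnorm n G v \<noteq> 0}"
  have bdd: "bdd_above Rset"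
  proof (rule bdd_aboveI)
    fix r assume "r \<in> Rset"
    then obtain v where r: "r = gnorm n G (mvec n A v) / gnorm n G v" and nz: "gnorm n G v \<noteq> 0"
      unfolding Rset_def by blast
    have gpos: "0 < gnorm n G v" using nz quad_nn[of v] by (simp add: gnorm_def)
    have "gnorm n G (mvec n A v) \<le> sqrt (m\<^sup>2 * Re (quad n G v))"
      unfolding gnorm_def using quadAv by (rule real_sqrt_le_mono)
    also have "\<dots> = m * gnorm n G v" using m0 by (simp add: gnorm_def real_sqrt_mult)
    finally show "r \<le> m" using gpos r by (simp add: divide_le_eq)
  qed
  have dbound: "\<bar>d a\<bar> \<le> CA" if a: "a < n" for a
  proof -
    let ?v = "colv S a"
    have Kpos: "0 < Re (K a a)" using posdef_col_nz[OF pd QS a] by (simp add: K_def)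
    have gv: "gnorm n G ?v = sqrt (Re (K a a))" by (simp add: gnorm_def K_def quad_sform)
    have "quad n G (mvec n A ?v) = sform n G (\<lambda>i. of_real (d a) * ?v i) (\<lambda>i. of_real (d a) * ?v i)"
      unfolding quad_sform by (rule sform_cong) (use Acol a in auto)
    also have "\<dots> = of_real ((d a)\<^sup>2) * K a a"
      by (simp add: sform_scale1 sform_scale2 K_def power2_eq_square)
    finally have "gnorm n G (mvec n A ?v) = \<bar>d a\<bar> * sqrt (Re (K a a))"
      by (simp add: gnorm_def real_sqrt_mult)
    then have "gnorm n G (mvec n A ?v) / gnorm n G ?v = \<bar>d a\<bar>" using gv Kpos by simp
    moreover have "gnorm n G ?v \<noteq> 0" using gv Kpos by simp
    ultimately have "\<bar>d a\<bar> \<in> Rset" unfolding Rset_def by force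
    then have "\<bar>d a\<bar> \<le> Sup Rset" using bdd by (rule cSup_upper)
    also have "Sup Rset \<le> CA" using nA by (simp add: opnorm_G_def Rset_def)
    finally show ?thesis .
  qed
  have quadM: "quad n GB (mvec n S z) = bform n M z" for z unfolding quadS M_def ..
  have hypc: "\<beta> * Re (bform n K y) \<le> (1 + c\<^sup>2/\<alpha>\<^sup>2) * Re (bform n M y)"
    if yc: "\<forall>a. y a \<noteq> 0 \<longrightarrow> d a = c" for c y
  proof -
    let ?u = "mvec n S y"
    have Dy: "(\<lambda>a. of_real (d a) * y a) = (\<lambda>a. of_real c * y a)"
    proof
      fix a show "of_real (d a) * y a = of_real c * y a" using yc by (cases "y a = 0") auto
    qed
    have Au: "mvec n A ?u i = mvec n S (\<lambda>a. of_real c * y a) i" if "i < n" for i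
      using AS[OF that, of y] Dy by simp
    define W where "W = mmult n (mmult n (mmult n (madj A) G) B) A"
    have "quad n W ?u = sform n (mmult n (mmult n (madj A) G) B) ?u (mvec n A ?u)"
      unfolding quad_sform W_def by (rule sform_mmult_r)
    also have "\<dots> = sform n (mmult n (madj A) G) ?u (mvec n B (mvec n A ?u))"
      by (rule sform_mmult_r)
    also have "\<dots> = sform n G (mvec n A ?u) (mvec n B (mvec n A ?u))"
      by (rule sform_mmult_l)
    also have "\<dots> = quad n GB (mvec n A ?u)"
      unfolding quad_sform GB_def by (rule sform_mmult_r[symmetric])
    also have "\<dots> = quad n GB (mvec n S (\<lambda>a. of_real c * y a))"
      unfolding quad_sform by (rule sform_cong) (use Au in auto)
    also have "\<dots> = of_real (c\<^sup>2) * bform n M y" unfolding quadM bform_scale ..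
    finally have qW: "quad n W ?u = of_real (c\<^sup>2) * bform n M y" .
    have "0 \<le> Re (quad n (msub (\<lambda>i j. GB i j + complex_of_real (1 / \<alpha>\<^sup>2) * W i j)
                  (msmult (complex_of_real \<beta>) G)) ?u)"
      using hyp unfolding loewner_ge_def psd_def GB_def W_def by blast
    also have "quad n (msub (\<lambda>i j. GB i j + complex_of_real (1 / \<alpha>\<^sup>2) * W i j)
                  (msmult (complex_of_real \<beta>) G)) ?u
       = bform n M y + of_real (1/\<alpha>\<^sup>2) * (of_real (c\<^sup>2) * bform n M y) - of_real \<beta> * bform n K y"
      unfolding quad_msub quad_add_smult quad_msmult qW quadM
      using quadS[of G y] by (simp add: K_def)
    finally have "0 \<le> Re (bform n M y) + (1/\<alpha>\<^sup>2) * (c\<^sup>2 * Re (bform n M y)) - \<beta> * Re (bform n K y)"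
      by simp
    then show ?thesis by (simp add: algebra_simps)
  qed
  have classc: "\<delta> * Re (bform n K (res d c w)) \<le> Re (bform n M (res d c w))"
    if c: "c \<in> d ` {..<n}" for c w
  proof -
    let ?y = "res d c w"
    let ?RK = "Re (bform n K ?y)" and ?RM = "Re (bform n M ?y)"
    from c obtain a where a: "a < n" "c = d a" by auto
    have "\<bar>c\<bar> \<le> CA" using dbound[OF a(1)] a(2) by simp
    then have "\<bar>c\<bar>^2 \<le> CA^2" by (rule power_mono) simp
    then have c2: "c\<^sup>2 \<le> CA\<^sup>2" by simp
    have "\<forall>a. ?y a \<noteq> 0 \<longrightarrow> d a = c" by (simp add: res_def)
    from hypc[OF this] have h: "\<beta> * ?RK \<le> (1 + c\<^sup>2/\<alpha>\<^sup>2) * ?RM" .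
    have "(1 + c\<^sup>2/\<alpha>\<^sup>2) \<le> (1 + CA\<^sup>2/\<alpha>\<^sup>2)" using c2 \<alpha> by (simp add: divide_right_mono)
    then have "(1 + c\<^sup>2/\<alpha>\<^sup>2) * ?RM \<le> (1 + CA\<^sup>2/\<alpha>\<^sup>2) * ?RM" using bM_nn by (rule mult_right_mono)
    with h have "\<beta> * ?RK \<le> (1 + CA\<^sup>2/\<alpha>\<^sup>2) * ?RM" by linarith
    moreover have "0 < 1 + CA\<^sup>2/\<alpha>\<^sup>2" by (simp add: add_pos_nonneg)
    ultimately show ?thesis unfolding \<delta>def by (simp add: field_simps)
  qed
  define Mm where "Mm = (\<lambda>a b. M a b * (if d a - d b = 0 then 1 else 0))"
  have L_eq: "L = mmult n (mmult n (madj Q) Mm) Q"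
  proof (intro ext)
    fix i j
    have "mmult n (mmult n (madj Q) Mm) Q i j = (\<Sum>b<n. \<Sum>a<n. cnj (Q a i) * M a b * Q b j * (if d a - d b = 0 then 1 else 0))"
      by (simp add: mmult_def madj_def Mm_def sum_distrib_right sum_distrib_left mult_ac)
    also have "\<dots> = L i j" unfolding L_def by (rule sum.swap)
    finally show "L i j = mmult n (mmult n (madj Q) Mm) Q i j" by simp
  qed
  have quadL: "quad n L v = (\<Sum>c\<in>d`{..<n}. bform n M (res d c (mvec n Q v)))" for v
  proof -
    have "quad n L v = sform n (mmult n (madj Q) Mm) v (mvec n Q v)"
      unfolding quad_sform L_eq by (rule sform_mmult_r)
    also have "\<dots> = bform n Mm (mvec n Q v)"
      unfolding bform_sform by (rule sform_mmult_l)
    also have "\<dots> = (\<Sum>a<n. \<Sum>b<n. if d a = d b then cnj (mvec n Q v a) * M a b * mvec n Q v b else 0)"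
      unfolding bform_def Mm_def by (rule sum.cong[OF refl], rule sum.cong[OF refl]) auto
    also have "\<dots> = (\<Sum>c\<in>d`{..<n}. bform n M (res d c (mvec n Q v)))"
      by (rule bform_classes[symmetric])
    finally show ?thesis .
  qed
  have GBh: "hermitian n GB" using pB unfolding psd_def GB_def by blast
  have Mh: "cnj (M a b) = M b a" for a b
    unfolding M_def using sform_herm[OF GBh, of "colv S b" "colv S a"] by simp
  have Gh: "G i j = cnj (G j i)" if "i < n" "j < n" for i j
    using pd that unfolding pos_def_def hermitian_def meq_def madj_def by blast
  have Lh: "L i j = cnj (L j i)" for i j
  proof -
    have "cnj (L j i) = (\<Sum>a<n. \<Sum>b<n. Q a j * cnj (M a b) * cnj (Q b i) * (if d a = d b then 1 else 0))"
      unfolding L_def cnj_sum by (rule sum.cong[OF refl], rule sum.cong[OF refl]) (simp split: if_split)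
    also have "\<dots> = (\<Sum>a<n. \<Sum>b<n. Q a j * M b a * cnj (Q b i) * (if d a = d b then 1 else 0))"
      by (simp add: Mh)
    also have "\<dots> = (\<Sum>b<n. \<Sum>a<n. Q a j * M b a * cnj (Q b i) * (if d a = d b then 1 else 0))"
      by (rule sum.swap)
    also have "\<dots> = L i j" unfolding L_def
      by (rule sum.cong[OF refl], rule sum.cong[OF refl]) (auto simp: mult_ac)
    finally show ?thesis by simp
  qed
  have lw: "loewner_ge n L (msmult (complex_of_real \<delta>) G)"
    unfolding loewner_ge_def psd_def
  proof (intro conjI allI)
    show "hermitian n (msub L (msmult (complex_of_real \<delta>) G))"
      unfolding hermitian_def meq_def
    proof (intro allI impI)
      fix i j assume "i < n" "j < n"
      then show "msub L (msmult (complex_of_real \<delta>) G) i j = madj (msub L (msmult (complex_of_real \<delta>) G)) i j"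
        using Lh[of i j] Gh[of i j] by (simp add: msub_def msmult_def madj_def)
    qed
  next
    fix v
    let ?w = "mvec n Q v"
    have "\<delta> * Re (quad n G v) = \<delta> * Re (\<Sum>c\<in>d`{..<n}. bform n K (res d c ?w))"
      using bform_classes_block[of n d K ?w] Kblock quadGv by simp
    also have "\<dots> = (\<Sum>c\<in>d`{..<n}. \<delta> * Re (bform n K (res d c ?w)))"
      by (simp add: Re_sum sum_distrib_left)
    also have "\<dots> \<le> (\<Sum>c\<in>d`{..<n}. Re (bform n M (res d c ?w)))"
      by (rule sum_mono) (rule classc)
    also have "\<dots> = Re (quad n L v)" by (simp add: quadL Re_sum)
    finally have "\<delta> * Re (quad n G v) \<le> Re (quad n L v)" .
    then show "0 \<le> Re (quad n (msub L (msmult (complex_of_real \<delta>) G)) v)"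
      by (simp add: quad_msub quad_msmult)
  qed
  have lim: "((\<lambda>T. time_avg n G A B T i j) \<longlongrightarrow> L i j) at_top" if ij: "i < n" "j < n" for i j
  proof -
    have f: "integrand n G A B t i j = (\<Sum>a<n. \<Sum>b<n. (cnj (Q a i) * M a b * Q b j)
            * exp (\<i> * of_real t * of_real (d a - d b)))" for t
      using integrand_formula[OF SQ QS AD ij, of G B t] by (simp add: M_def GB_def)
    have "((\<lambda>T. of_real (1/(2*T)) * integral {-T..T} (\<lambda>t. integrand n G A B t i j)) \<longlongrightarrow> L i j) at_top"
      unfolding L_def by (rule avg_sum_lim[OF f])
    then show ?thesis by (simp add: time_avg_def)
  qed
  show ?thesis using lim lw by blast
qed

theorem lemma5p2:
  fixes \<alpha> \<beta> C\<^sub>A C\<^sub>B :: real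
  assumes "\<alpha> > 0" and "\<beta> > 0"
  shows "\<exists>\<delta>>0. \<forall>(n::nat) (G::cmat) (A::cmat) (B::cmat).
     pos_def n G \<and>
     meq n (mmult n G A) (mmult n (madj A) G) \<and>
     meq n (mmult n G B) (mmult n (madj B) G) \<and>
     psd n (mmult n G B) \<and>
     opnorm_G n G A \<le> C\<^sub>A \<and> opnorm_G n G B \<le> C\<^sub>B \<and>
     loewner_ge n (\<lambda>i j. mmult n G B i j
                       + complex_of_real (1 / \<alpha>\<^sup>2) * mmult n (mmult n (mmult n (madj A) G) B) A i j)
                  (msmult (complex_of_real \<beta>) G)
     \<longrightarrow> (\<exists>L. (\<forall>i<n. \<forall>j<n. ((\<lambda>T. time_avg n G A B T i j) \<longlongrightarrow> L i j) at_top)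
              \<and> loewner_ge n L (msmult (complex_of_real \<delta>) G))"
proof -
  define \<delta> where "\<delta> = \<beta> / (1 + C\<^sub>A\<^sup>2 / \<alpha>\<^sup>2)"
  have "0 < 1 + C\<^sub>A\<^sup>2 / \<alpha>\<^sup>2" by (simp add: add_pos_nonneg)
  then have d0: "\<delta> > 0" using assms(2) unfolding \<delta>_def by simp
  show ?thesis
  proof (intro exI[of _ \<delta>] conjI d0 allI impI)
    fix n G A B
    assume h: "pos_def n G \<and>
     meq n (mmult n G A) (mmult n (madj A) G) \<and>
     meq n (mmult n G B) (mmult n (madj B) G) \<and>
     psd n (mmult n G B) \<and>
     opnorm_G n G A \<le> C\<^sub>A \<and> opnorm_G n G B \<le> C\<^sub>B \<and>
     loewner_ge n (\<lambda>i j. mmult n G B i j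
                       + complex_of_real (1 / \<alpha>\<^sup>2) * mmult n (mmult n (mmult n (madj A) G) B) A i j)
                  (msmult (complex_of_real \<beta>) G)"
    show "\<exists>L. (\<forall>i<n. \<forall>j<n. ((\<lambda>T. time_avg n G A B T i j) \<longlongrightarrow> L i j) at_top)
              \<and> loewner_ge n L (msmult (complex_of_real \<delta>) G)"
      using main_inst[OF assms(1,2) \<delta>_def] h by blast
  qed
qed

end
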